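(* For any Markov policy $\pi$ and every $h\in[H]$ (for claim 3, $h\ge1$): (1) $\bar d^\pi_h\le d^\pi_h$ pointwise. (2) If for all $h'<h$ we have $d^\pi_{h'}\le C^{\mathbf x}_{h'}d^D_{h'}$ and $\pi_{h'}\le C^{\mathbf a}_{h'}\pi^D_{h'}$ pointwise, then $\bar d^\pi_h=d^\pi_h$. (3) $\|\bar d^\pi_h-d^\pi_h\|_1\le\|\bar d^\pi_{h-1}-d^\pi_{h-1}\|_1+\|\bar d^\pi_{h-1}-\bar d^\pi_{h-1}\wedge C^{\mathbf x}_{h-1}d^D_{h-1}\|_1+\|\mathbf P^\pi_{h-1}d^\pi_{h-1}-\mathbf P^{\bar\pi}_{h-1}d^\pi_{h-1}\|_1$.
   Context: Setting: finite-horizon episodic MDP with measurable state space $\mathcal X$, finite action space $\mathcal A$, $[H]=\{0,\dots,H-1\}$, transition densities $P_h(\cdot\mid x,a)$, initial distribution $d_0$; $d^\pi_h$ is the density of $x_h$ under the Markov policy $\pi=(\pi_h)$. Offline data: for each $h$, $\mathcal D_h$ consists of i.i.d. tuples $(x_h,a_h,x_{h+1})$ (conditionally on earlier data) generated by an arbitrary (possibly history-dependent) roll-in policy to $x_h$, then $a_h\sim\pi^D_h(\cdot\mid x_h)$ for a Markov single-step policy $\pi^D_h$, then $x_{h+1}\sim P_h$; $d^D_h$ is the marginal density of $x_h$ in $\mathcal D_h$. Notation: $a\wedge b=\min(a,b)$ pointwise; for $d:\mathcal X\to\mathbb R$ and nonnegative $\pi_h(a\mid x)$, $(\mathbf P^\pi_hd)(x'):=\iint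 P_h(x'\mid x,a)\pi_h(a\mid x)d(x)\mathrm dx\,\mathrm da$. Recursively clipped occupancy: given thresholds $C^{\mathbf x}_h,C^{\mathbf a}_h>0$, the pseudo-policy $\bar\pi_h:=\pi_h\wedge C^{\mathbf a}_h\pi^D_h$, $\bar d^\pi_0:=d_0$, and $\bar d^\pi_h:=\mathbf P^{\bar\pi}_{h-1}(\bar d^\pi_{h-1}\wedge C^{\mathbf x}_{h-1}d^D_{h-1})$ for $h\ge1$. *)

theory Defs
  imports "HOL-Analysis.Analysis"
begin

text \<open>Densities are nonnegative extended reals (ennreal) with respect to a reference
  measure M on the state space; the (finite) action space A carries counting measure,
  so the integral over actions is a finite sum.
  Convention: P h x a x' is the transition density P_h(x' | x, a); pol h x a is pi_h(a | x).\<close>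

definition Pop :: "'x measure \<Rightarrow> 'a set \<Rightarrow> (nat \<Rightarrow> 'x \<Rightarrow> 'a \<Rightarrow> 'x \<Rightarrow> ennreal)
    \<Rightarrow> nat \<Rightarrow> ('x \<Rightarrow> 'a \<Rightarrow> ennreal) \<Rightarrow> ('x \<Rightarrow> ennreal) \<Rightarrow> 'x \<Rightarrow> ennreal" where
  "Pop M A P h pol d x' = (\<integral>\<^sup>+ x. (\<Sum>a\<in>A. P h x a x' * pol x a * d x) \<partial>M)"

primrec occ :: "'x measure \<Rightarrow> 'a set \<Rightarrow> (nat \<Rightarrow> 'x \<Rightarrow> 'a \<Rightarrow> 'x \<Rightarrow> ennreal)
    \<Rightarrow> ('x \<Rightarrow> ennreal) \<Rightarrow> (nat \<Rightarrow> 'x \<Rightarrow> 'a \<Rightarrow> ennreal) \<Rightarrow> nat \<Rightarrow> 'x \<Rightarrow> ennreal" where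
  "occ M A P d0 pol 0 = d0"
| "occ M A P d0 pol (Suc h) = Pop M A P h (pol h) (occ M A P d0 pol h)"

definition clip_pol :: "(nat \<Rightarrow> 'x \<Rightarrow> 'a \<Rightarrow> ennreal) \<Rightarrow> (nat \<Rightarrow> 'x \<Rightarrow> 'a \<Rightarrow> ennreal)
    \<Rightarrow> (nat \<Rightarrow> real) \<Rightarrow> nat \<Rightarrow> 'x \<Rightarrow> 'a \<Rightarrow> ennreal" where
  "clip_pol pol polD Ca h x a = min (pol h x a) (ennreal (Ca h) * polD h x a)"

primrec clip_occ :: "'x measure \<Rightarrow> 'a set \<Rightarrow> (nat \<Rightarrow> 'x \<Rightarrow> 'a \<Rightarrow> 'x \<Rightarrow> ennreal)
    \<Rightarrow> ('x \<Rightarrow> ennreal) \<Rightarrow> (nat \<Rightarrow> 'x \<Rightarrow> 'a \<Rightarrow> ennreal) \<Rightarrow> (nat \<Rightarrow> 'x \<Rightarrow> 'a \<Rightarrow> ennreal)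
    \<Rightarrow> (nat \<Rightarrow> 'x \<Rightarrow> ennreal) \<Rightarrow> (nat \<Rightarrow> real) \<Rightarrow> (nat \<Rightarrow> real) \<Rightarrow> nat \<Rightarrow> 'x \<Rightarrow> ennreal" where
  "clip_occ M A P d0 pol polD dD Cx Ca 0 = d0"
| "clip_occ M A P d0 pol polD dD Cx Ca (Suc h) =
     Pop M A P h (clip_pol pol polD Ca h)
       (\<lambda>x. min (clip_occ M A P d0 pol polD dD Cx Ca h x) (ennreal (Cx h) * dD h x))"

text \<open>Absolute difference of extended nonnegative reals (equals |a - b| for finite values)
  and the L1 distance w.r.t. M.\<close>
definition eabsdiff :: "ennreal \<Rightarrow> ennreal \<Rightarrow> ennreal" where
  "eabsdiff a b = (a - b) + (b - a)"

definition L1dist :: "'x measure \<Rightarrow> ('x \<Rightarrow> ennreal) \<Rightarrow> ('x \<Rightarrow> ennreal) \<Rightarrow> ennreal" where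
  "L1dist M f g = (\<integral>\<^sup>+ x. eabsdiff (f x) (g x) \<partial>M)"

end

theory Submission
  imports Defs
begin

lemma integrand_meas:
  fixes P :: "nat \<Rightarrow> 'x \<Rightarrow> 'a \<Rightarrow> 'x \<Rightarrow> ennreal"
  assumes P_meas: "\<And>a. a \<in> A \<Longrightarrow> (\<lambda>(x, x'). P h x a x') \<in> borel_measurable (M \<Otimes>\<^sub>M M)"
    and q: "\<And>a. a \<in> A \<Longrightarrow> (\<lambda>x. q x a) \<in> borel_measurable M"
    and e: "e \<in> borel_measurable M"
  shows "(\<lambda>p. \<Sum>a\<in>A. P h (fst p) a (snd p) * q (fst p) a * e (fst p)) \<in> borel_measurable (M \<Otimes>\<^sub>M M)"
proof (rule borel_measurable_sum)
  fix a assume a: "a \<in> A"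
  have 1: "(\<lambda>p. P h (fst p) a (snd p)) \<in> borel_measurable (M \<Otimes>\<^sub>M M)"
    using P_meas[OF a] by (simp add: case_prod_beta')
  have 2: "(\<lambda>p. q (fst p) a) \<in> borel_measurable (M \<Otimes>\<^sub>M M)"
    using q[OF a] by measurable
  have 3: "(\<lambda>p. e (fst p)) \<in> borel_measurable (M \<Otimes>\<^sub>M M)"
    using e by measurable
  show "(\<lambda>p. P h (fst p) a (snd p) * q (fst p) a * e (fst p)) \<in> borel_measurable (M \<Otimes>\<^sub>M M)"
    using 1 2 3 by measurable
qed

lemma Pop_meas:
  fixes P :: "nat \<Rightarrow> 'x \<Rightarrow> 'a \<Rightarrow> 'x \<Rightarrow> ennreal"
  assumes M: "sigma_finite_measure M"
    and P_meas: "\<And>a. a \<in> A \<Longrightarrow> (\<lambda>(x, x'). P h x a x') \<in> borel_measurable (M \<Otimes>\<^sub>M M)"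
    and q: "\<And>a. a \<in> A \<Longrightarrow> (\<lambda>x. q x a) \<in> borel_measurable M"
    and e: "e \<in> borel_measurable M"
  shows "Pop M A P h q e \<in> borel_measurable M"
proof -
  have m: "(\<lambda>p. \<Sum>a\<in>A. P h (fst p) a (snd p) * q (fst p) a * e (fst p)) \<in> borel_measurable (M \<Otimes>\<^sub>M M)"
    by (rule integrand_meas[of A P h M q e, OF P_meas q e])
  have "(\<lambda>p. \<Sum>a\<in>A. P h (snd p) a (fst p) * q (snd p) a * e (snd p)) \<in> borel_measurable (M \<Otimes>\<^sub>M M)"
    using measurable_compose[OF measurable_pair_swap' m] by (simp add: case_prod_beta')
  then have "case_prod (\<lambda>x' x. \<Sum>a\<in>A. P h x a x' * q x a * e x) \<in> borel_measurable (M \<Otimes>\<^sub>M M)"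
    by (simp add: case_prod_beta')
  from sigma_finite_measure.borel_measurable_nn_integral[OF M this]
  show ?thesis unfolding Pop_def[abs_def] by simp
qed

lemma Pop_int:
  fixes P :: "nat \<Rightarrow> 'x \<Rightarrow> 'a \<Rightarrow> 'x \<Rightarrow> ennreal"
  assumes M: "sigma_finite_measure M" and A: "finite A"
    and P_meas: "\<And>a. a \<in> A \<Longrightarrow> (\<lambda>(x, x'). P h x a x') \<in> borel_measurable (M \<Otimes>\<^sub>M M)"
    and P_prob: "\<And>x a. x \<in> space M \<Longrightarrow> a \<in> A \<Longrightarrow> (\<integral>\<^sup>+ x'. P h x a x' \<partial>M) = 1"
    and q: "\<And>a. a \<in> A \<Longrightarrow> (\<lambda>x. q x a) \<in> borel_measurable M"
    and e: "e \<in> borel_measurable M"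
  shows "(\<integral>\<^sup>+ x'. Pop M A P h q e x' \<partial>M) = (\<integral>\<^sup>+ x. (\<Sum>a\<in>A. q x a) * e x \<partial>M)"
proof -
  interpret pair_sigma_finite M M using M by (simp add: pair_sigma_finite_def)
  have m: "(\<lambda>p. \<Sum>a\<in>A. P h (fst p) a (snd p) * q (fst p) a * e (fst p)) \<in> borel_measurable (M \<Otimes>\<^sub>M M)"
    by (rule integrand_meas[of A P h M q e, OF P_meas q e])
  hence m': "case_prod (\<lambda>x x'. \<Sum>a\<in>A. P h x a x' * q x a * e x) \<in> borel_measurable (M \<Otimes>\<^sub>M M)"
    by (simp add: case_prod_beta')
  have "(\<integral>\<^sup>+ x'. Pop M A P h q e x' \<partial>M) = (\<integral>\<^sup>+ x. (\<integral>\<^sup>+ x'. (\<Sum>a\<in>A. P h x a x' * q x a * e x) \<partial>M) \<partial>M)"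
    unfolding Pop_def by (rule Fubini'[OF m'])
  also have "\<dots> = (\<integral>\<^sup>+ x. (\<Sum>a\<in>A. q x a) * e x \<partial>M)"
  proof (rule nn_integral_cong)
    fix x assume x: "x \<in> space M"
    have "(\<integral>\<^sup>+ x'. (\<Sum>a\<in>A. P h x a x' * q x a * e x) \<partial>M) = (\<Sum>a\<in>A. \<integral>\<^sup>+ x'. P h x a x' * q x a * e x \<partial>M)"
    proof (rule nn_integral_sum)
      fix a assume a: "a \<in> A"
      have "(\<lambda>x'. P h x a x') \<in> borel_measurable M"
        using measurable_compose[OF measurable_Pair1'[OF x] P_meas[OF a]] by simp
      then show "(\<lambda>x'. P h x a x' * q x a * e x) \<in> borel_measurable M" by measurable
    qed
    also have "\<dots> = (\<Sum>a\<in>A. (\<integral>\<^sup>+ x'. P h x a x' \<partial>M) * (q x a * e x))"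
    proof (rule sum.cong[OF refl])
      fix a assume a: "a \<in> A"
      have "(\<lambda>x'. P h x a x') \<in> borel_measurable M"
        using measurable_compose[OF measurable_Pair1'[OF x] P_meas[OF a]] by simp
      then show "(\<integral>\<^sup>+ x'. P h x a x' * q x a * e x \<partial>M) = (\<integral>\<^sup>+ x'. P h x a x' \<partial>M) * (q x a * e x)"
        by (simp add: mult.assoc nn_integral_multc)
    qed
    also have "\<dots> = (\<Sum>a\<in>A. q x a) * e x"
      using P_prob[OF x] by (simp add: sum_distrib_right cong: sum.cong)
    finally show "(\<integral>\<^sup>+ x'. (\<Sum>a\<in>A. P h x a x' * q x a * e x) \<partial>M) = (\<Sum>a\<in>A. q x a) * e x" .
  qed
  finally show ?thesis .
qed


lemma Pop_add:
  fixes P :: "nat \<Rightarrow> 'x \<Rightarrow> 'a \<Rightarrow> 'x \<Rightarrow> ennreal"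
  assumes P_meas: "\<And>a. a \<in> A \<Longrightarrow> (\<lambda>(x, x'). P h x a x') \<in> borel_measurable (M \<Otimes>\<^sub>M M)"
    and q: "\<And>a. a \<in> A \<Longrightarrow> (\<lambda>x. q x a) \<in> borel_measurable M"
    and f: "f \<in> borel_measurable M" and g: "g \<in> borel_measurable M"
    and y: "y \<in> space M"
  shows "Pop M A P h q (\<lambda>x. f x + g x) y = Pop M A P h q f y + Pop M A P h q g y"
proof -
  have Pm: "(\<lambda>x. P h x a y) \<in> borel_measurable M" if a: "a \<in> A" for a
    using measurable_compose[OF measurable_Pair2'[OF y] P_meas[OF a]] by simp
  have T: "(\<lambda>x. P h x a y * q x a * u x) \<in> borel_measurable M"
    if "a \<in> A" "u \<in> borel_measurable M" for a u
    using Pm[OF that(1)] q[OF that(1)] that(2) by measurable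
  have "Pop M A P h q (\<lambda>x. f x + g x) y
      = (\<integral>\<^sup>+ x. (\<Sum>a\<in>A. P h x a y * q x a * f x) + (\<Sum>a\<in>A. P h x a y * q x a * g x) \<partial>M)"
    unfolding Pop_def by (simp add: distrib_left sum.distrib)
  also have "\<dots> = Pop M A P h q f y + Pop M A P h q g y"
    unfolding Pop_def
    by (rule nn_integral_add) (auto intro!: borel_measurable_sum T f g)
  finally show ?thesis .
qed

lemma E1: "(F::ennreal) \<noteq> top \<Longrightarrow> eabsdiff F G \<le> X + eabsdiff G (X + F)"
  unfolding eabsdiff_def
  by (cases F; cases G; cases X) (auto simp: ennreal_minus ennreal_plus_if ennreal_le_iff2 simp del: ennreal_plus split: if_splits)

lemma E2: "(d::ennreal) - m \<le> eabsdiff b d + eabsdiff b m"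
  unfolding eabsdiff_def
  by (cases d; cases m; cases b) (auto simp: ennreal_minus ennreal_plus_if ennreal_le_iff2 simp del: ennreal_plus split: if_splits)

theorem proposition2:
  fixes M :: "'x measure" and A :: "'a set" and H :: nat
    and P :: "nat \<Rightarrow> 'x \<Rightarrow> 'a \<Rightarrow> 'x \<Rightarrow> ennreal"
    and d0 :: "'x \<Rightarrow> ennreal"
    and pol polD :: "nat \<Rightarrow> 'x \<Rightarrow> 'a \<Rightarrow> ennreal"
    and dD :: "nat \<Rightarrow> 'x \<Rightarrow> ennreal"
    and Cx Ca :: "nat \<Rightarrow> real"
  assumes M: "sigma_finite_measure M"
    and A: "finite A" "A \<noteq> {}"
    and P_meas: "\<And>h a. a \<in> A \<Longrightarrow> (\<lambda>(x, x'). P h x a x') \<in> borel_measurable (M \<Otimes>\<^sub>M M)"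
    and P_prob: "\<And>h x a. x \<in> space M \<Longrightarrow> a \<in> A \<Longrightarrow> (\<integral>\<^sup>+ x'. P h x a x' \<partial>M) = 1"
    and d0_meas: "d0 \<in> borel_measurable M"
    and d0_prob: "(\<integral>\<^sup>+ x. d0 x \<partial>M) = 1"
    and pol_meas: "\<And>h a. a \<in> A \<Longrightarrow> (\<lambda>x. pol h x a) \<in> borel_measurable M"
    and pol_prob: "\<And>h x. x \<in> space M \<Longrightarrow> (\<Sum>a\<in>A. pol h x a) = 1"
    and polD_meas: "\<And>h a. a \<in> A \<Longrightarrow> (\<lambda>x. polD h x a) \<in> borel_measurable M"
    and polD_prob: "\<And>h x. x \<in> space M \<Longrightarrow> (\<Sum>a\<in>A. polD h x a) = 1"
    and dD_meas: "\<And>h. dD h \<in> borel_measurable M"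
    and dD_prob: "\<And>h. (\<integral>\<^sup>+ x. dD h x \<partial>M) = 1"
    and Cx_pos: "\<And>h. Cx h > 0"
    and Ca_pos: "\<And>h. Ca h > 0"
  shows
    "(\<forall>h < H. \<forall>x \<in> space M.
        clip_occ M A P d0 pol polD dD Cx Ca h x \<le> occ M A P d0 pol h x)
    \<and>
    (\<forall>h < H.
       (\<forall>h' < h. (\<forall>x \<in> space M. occ M A P d0 pol h' x \<le> ennreal (Cx h') * dD h' x)
               \<and> (\<forall>x \<in> space M. \<forall>a \<in> A. pol h' x a \<le> ennreal (Ca h') * polD h' x a))
       \<longrightarrow> (\<forall>x \<in> space M. clip_occ M A P d0 pol polD dD Cx Ca h x = occ M A P d0 pol h x))
    \<and>
    (\<forall>h < H. 1 \<le> h \<longrightarrow>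
       L1dist M (clip_occ M A P d0 pol polD dD Cx Ca h) (occ M A P d0 pol h)
       \<le> L1dist M (clip_occ M A P d0 pol polD dD Cx Ca (h - 1)) (occ M A P d0 pol (h - 1))
         + L1dist M (clip_occ M A P d0 pol polD dD Cx Ca (h - 1))
                    (\<lambda>x. min (clip_occ M A P d0 pol polD dD Cx Ca (h - 1) x)
                             (ennreal (Cx (h - 1)) * dD (h - 1) x))
         + L1dist M (Pop M A P (h - 1) (pol (h - 1)) (occ M A P d0 pol (h - 1)))
                    (Pop M A P (h - 1) (clip_pol pol polD Ca (h - 1)) (occ M A P d0 pol (h - 1))))"
proof -
  define cl where "cl = clip_occ M A P d0 pol polD dD Cx Ca"
  define oc where "oc = occ M A P d0 pol"
  define cp where "cp = clip_pol pol polD Ca"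
  have clS: "cl (Suc h) = Pop M A P h (cp h) (\<lambda>x. min (cl h x) (ennreal (Cx h) * dD h x))" for h
    by (simp add: cl_def cp_def)
  have ocS: "oc (Suc h) = Pop M A P h (pol h) (oc h)" for h by (simp add: oc_def)
  have cl0: "cl 0 = d0" by (simp add: cl_def)
  have oc0: "oc 0 = d0" by (simp add: oc_def)
  have cp_meas: "(\<lambda>x. cp h x a) \<in> borel_measurable M" if a: "a \<in> A" for h a
    unfolding cp_def clip_pol_def using pol_meas[OF a, of h] polD_meas[OF a, of h] by measurable
  have cp_le: "cp h x a \<le> pol h x a" for h x a by (simp add: cp_def clip_pol_def)
  have cp_sum: "(\<Sum>a\<in>A. cp h x a) \<le> 1" if x: "x \<in> space M" for h x
  proof -
    have "(\<Sum>a\<in>A. cp h x a) \<le> (\<Sum>a\<in>A. pol h x a)" by (rule sum_mono) (rule cp_le)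
    then show ?thesis using pol_prob[OF x, of h] by simp
  qed
  have oc_meas: "oc h \<in> borel_measurable M" for h
  proof (induction h)
    case 0 then show ?case using d0_meas by (simp add: oc0)
  next
    case (Suc h)
    show ?case unfolding ocS by (rule Pop_meas[OF M]) (auto intro: P_meas pol_meas Suc.IH)
  qed
  have cl_meas: "cl h \<in> borel_measurable M" for h
  proof (induction h)
    case 0 then show ?case using d0_meas by (simp add: cl0)
  next
    case (Suc h)
    have mm: "(\<lambda>x. min (cl h x) (ennreal (Cx h) * dD h x)) \<in> borel_measurable M"
      using Suc.IH dD_meas[of h] by measurable
    show ?case unfolding clS by (rule Pop_meas[OF M]) (auto intro: P_meas cp_meas mm)
  qed
  have oc_int: "(\<integral>\<^sup>+x. oc h x \<partial>M) = 1" for h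
  proof (induction h)
    case 0 show ?case using d0_prob by (simp add: oc0)
  next
    case (Suc h)
    have "(\<integral>\<^sup>+x. oc (Suc h) x \<partial>M) = (\<integral>\<^sup>+x. (\<Sum>a\<in>A. pol h x a) * oc h x \<partial>M)"
      unfolding ocS by (rule Pop_int[OF M A(1)]) (auto intro: P_meas P_prob pol_meas oc_meas)
    also have "\<dots> = (\<integral>\<^sup>+x. oc h x \<partial>M)" by (rule nn_integral_cong) (simp add: pol_prob)
    finally show ?case using Suc.IH by simp
  qed
  have c1: "cl h x \<le> oc h x" if "x \<in> space M" for h x
    using that
  proof (induction h arbitrary: x)
    case 0 thus ?case by (simp add: cl0 oc0)
  next
    case (Suc h)
    show ?case unfolding clS ocS Pop_def
    proof (rule nn_integral_mono)
      fix y assume y: "y \<in> space M"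
      have "min (cl h y) (ennreal (Cx h) * dD h y) \<le> oc h y"
        using Suc.IH[OF y] by (rule order.trans[OF min.cobounded1])
      then show "(\<Sum>a\<in>A. P h y a x * cp h y a * min (cl h y) (ennreal (Cx h) * dD h y))
          \<le> (\<Sum>a\<in>A. P h y a x * pol h y a * oc h y)"
        by (intro sum_mono mult_mono) (auto simp: cp_le)
    qed
  qed
  have c2: "cl h x = oc h x"
    if "\<forall>h'<h. \<forall>x\<in>space M. oc h' x \<le> ennreal (Cx h') * dD h' x"
       "\<forall>h'<h. \<forall>x\<in>space M. \<forall>a\<in>A. pol h' x a \<le> ennreal (Ca h') * polD h' x a"
       "x \<in> space M" for h x
    using that
  proof (induction h arbitrary: x)
    case 0 thus ?case by (simp add: cl0 oc0)
  next
    case (Suc h)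
    have eq: "cl h y = oc h y" if y: "y \<in> space M" for y
      using Suc.prems y by (intro Suc.IH) auto
    show ?case unfolding clS ocS Pop_def
    proof (intro nn_integral_cong sum.cong refl)
      fix y a assume y: "y \<in> space M" and a: "a \<in> A"
      have "cp h y a = pol h y a" using Suc.prems(2) y a
        by (auto simp: cp_def clip_pol_def min_absorb1)
      moreover have "min (cl h y) (ennreal (Cx h) * dD h y) = oc h y"
        using Suc.prems(1) y eq[OF y] by (auto simp: min_absorb1)
      ultimately show "P h y a x * cp h y a * min (cl h y) (ennreal (Cx h) * dD h y)
          = P h y a x * pol h y a * oc h y" by simp
    qed
  qed
  have c3: "L1dist M (cl (Suc k)) (oc (Suc k))
       \<le> L1dist M (cl k) (oc k) + L1dist M (cl k) (\<lambda>x. min (cl k x) (ennreal (Cx k) * dD k x))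
         + L1dist M (Pop M A P k (pol k) (oc k)) (Pop M A P k (cp k) (oc k))" for k
  proof -
    define m where "m = (\<lambda>x. min (cl k x) (ennreal (Cx k) * dD k x))"
    define dm where "dm = (\<lambda>x. oc k x - m x)"
    define F where "F = Pop M A P k (cp k) m"
    define G where "G = Pop M A P k (pol k) (oc k)"
    define K where "K = Pop M A P k (cp k) (oc k)"
    define X where "X = Pop M A P k (cp k) dm"
    have m_meas: "m \<in> borel_measurable M" unfolding m_def using cl_meas[of k] dD_meas[of k] by measurable
    have dm_meas: "dm \<in> borel_measurable M" unfolding dm_def using oc_meas[of k] m_meas by measurable
    have Fm: "F \<in> borel_measurable M" unfolding F_def
      by (rule Pop_meas[OF M]) (auto intro: P_meas cp_meas m_meas)
    have Gm: "G \<in> borel_measurable M" unfolding G_def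
      by (rule Pop_meas[OF M]) (auto intro: P_meas pol_meas oc_meas)
    have Km: "K \<in> borel_measurable M" unfolding K_def
      by (rule Pop_meas[OF M]) (auto intro: P_meas cp_meas oc_meas)
    have Xm: "X \<in> borel_measurable M" unfolding X_def
      by (rule Pop_meas[OF M]) (auto intro: P_meas cp_meas dm_meas)
    have mle: "m x \<le> oc k x" if "x \<in> space M" for x
      using c1[OF that, of k] by (simp add: m_def min.coboundedI1)
    have Kdec: "K y = X y + F y" if y: "y \<in> space M" for y
    proof -
      have "K y = Pop M A P k (cp k) (\<lambda>x. dm x + m x) y" unfolding K_def Pop_def
        by (intro nn_integral_cong sum.cong refl) (simp add: dm_def mle diff_add_cancel_ennreal)
      also have "\<dots> = X y + F y" unfolding X_def F_def
        by (rule Pop_add) (auto intro: P_meas cp_meas dm_meas m_meas y)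
      finally show ?thesis .
    qed
    have Ffin: "AE y in M. F y \<noteq> \<infinity>"
    proof (rule nn_integral_noteq_infinite[OF Fm])
      have "(\<integral>\<^sup>+y. F y \<partial>M) \<le> (\<integral>\<^sup>+y. oc (Suc k) y \<partial>M)"
      proof (rule nn_integral_mono)
        fix y assume "y \<in> space M"
        then show "F y \<le> oc (Suc k) y" using c1[of y "Suc k"] by (simp add: F_def m_def clS)
      qed
      then show "(\<integral>\<^sup>+y. F y \<partial>M) \<noteq> \<infinity>" using oc_int[of "Suc k"] by (auto simp: top_unique)
    qed
    have pw: "AE y in M. eabsdiff (F y) (G y) \<le> X y + eabsdiff (G y) (K y)"
      using Ffin AE_space
    proof eventually_elim
      case (elim y)
      then show ?case using E1[of "F y" "G y" "X y"] Kdec[of y] by simp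
    qed
    have em: "(\<lambda>y. eabsdiff (G y) (K y)) \<in> borel_measurable M"
      unfolding eabsdiff_def using Gm Km by measurable
    have Xb: "(\<integral>\<^sup>+y. X y \<partial>M) \<le> L1dist M (cl k) (oc k) + L1dist M (cl k) m"
    proof -
      have "(\<integral>\<^sup>+y. X y \<partial>M) = (\<integral>\<^sup>+x. (\<Sum>a\<in>A. cp k x a) * dm x \<partial>M)" unfolding X_def
        by (rule Pop_int[OF M A(1)]) (auto intro: P_meas P_prob cp_meas dm_meas)
      also have "\<dots> \<le> (\<integral>\<^sup>+x. dm x \<partial>M)"
      proof (rule nn_integral_mono)
        fix x assume x: "x \<in> space M"
        have "(\<Sum>a\<in>A. cp k x a) * dm x \<le> 1 * dm x"
          by (rule mult_right_mono[OF cp_sum[OF x]]) simp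
        then show "(\<Sum>a\<in>A. cp k x a) * dm x \<le> dm x" by simp
      qed
      also have "\<dots> \<le> (\<integral>\<^sup>+x. eabsdiff (cl k x) (oc k x) + eabsdiff (cl k x) (m x) \<partial>M)"
        by (rule nn_integral_mono) (simp add: dm_def E2)
      also have "\<dots> = L1dist M (cl k) (oc k) + L1dist M (cl k) m" unfolding L1dist_def
        by (rule nn_integral_add) (unfold eabsdiff_def, use cl_meas[of k] oc_meas[of k] m_meas in measurable)+
      finally show ?thesis .
    qed
    have "L1dist M (cl (Suc k)) (oc (Suc k)) = (\<integral>\<^sup>+y. eabsdiff (F y) (G y) \<partial>M)"
      unfolding L1dist_def F_def G_def m_def clS ocS by simp
    also have "\<dots> \<le> (\<integral>\<^sup>+y. X y + eabsdiff (G y) (K y) \<partial>M)" by (rule nn_integral_mono_AE[OF pw])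
    also have "\<dots> = (\<integral>\<^sup>+y. X y \<partial>M) + (\<integral>\<^sup>+y. eabsdiff (G y) (K y) \<partial>M)"
      by (rule nn_integral_add[OF Xm em])
    also have "\<dots> \<le> (L1dist M (cl k) (oc k) + L1dist M (cl k) m) + (\<integral>\<^sup>+y. eabsdiff (G y) (K y) \<partial>M)"
      by (rule add_right_mono[OF Xb])
    finally show ?thesis unfolding L1dist_def G_def K_def m_def by simp
  qed
  have part1: "\<forall>h < H. \<forall>x \<in> space M. cl h x \<le> oc h x" using c1 by blast
  have part2: "\<forall>h < H.
       (\<forall>h' < h. (\<forall>x \<in> space M. oc h' x \<le> ennreal (Cx h') * dD h' x)
               \<and> (\<forall>x \<in> space M. \<forall>a \<in> A. pol h' x a \<le> ennreal (Ca h') * polD h' x a))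
       \<longrightarrow> (\<forall>x \<in> space M. cl h x = oc h x)"
  proof (intro allI impI ballI)
    fix h x
    assume H: "\<forall>h' < h. (\<forall>x \<in> space M. oc h' x \<le> ennreal (Cx h') * dD h' x)
               \<and> (\<forall>x \<in> space M. \<forall>a \<in> A. pol h' x a \<le> ennreal (Ca h') * polD h' x a)"
      and x: "x \<in> space M"
    show "cl h x = oc h x" by (rule c2) (use H x in auto)
  qed
  have part3: "\<forall>h < H. 1 \<le> h \<longrightarrow>
       L1dist M (cl h) (oc h)
       \<le> L1dist M (cl (h - 1)) (oc (h - 1))
         + L1dist M (cl (h - 1)) (\<lambda>x. min (cl (h - 1) x) (ennreal (Cx (h - 1)) * dD (h - 1) x))
         + L1dist M (Pop M A P (h - 1) (pol (h - 1)) (oc (h - 1)))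
                    (Pop M A P (h - 1) (cp (h - 1)) (oc (h - 1)))"
  proof (intro allI impI)
    fix h assume "h < H" "1 \<le> h"
    then obtain k where k: "h = Suc k" by (cases h) auto
    show "L1dist M (cl h) (oc h)
       \<le> L1dist M (cl (h - 1)) (oc (h - 1))
         + L1dist M (cl (h - 1)) (\<lambda>x. min (cl (h - 1) x) (ennreal (Cx (h - 1)) * dD (h - 1) x))
         + L1dist M (Pop M A P (h - 1) (pol (h - 1)) (oc (h - 1)))
                    (Pop M A P (h - 1) (cp (h - 1)) (oc (h - 1)))"
      unfolding k using c3[of k] by simp
  qed
  show ?thesis
    using part1 part2 part3 unfolding cl_def oc_def cp_def by blast
qed

end
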